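(* Let $P$ be a finite lattice and $f,g\in\mathcal{L}_P$. If $w\in\mathcal{L}_P$ is prime and $w\le f+g$, then there exist prime $u,v\in\mathcal{L}_P$ with $u\le f$, $v\le g$ and $w\le u+v$.
   Context: $P$ is a finite lattice. $\mathcal{L}_P$ is the set of maps $f:P\to P$ satisfying (A.1) $a\le f(a)$; (A.2) $a\le b\Rightarrow f(a)\le f(b)$; (A.3) $f(f(a))=f(a)$, ordered pointwise ($f\le g$ iff $f(a)\le g(a)$ for all $a$); it is a lattice with join $+$. $\Phi f=\{a:f(a)=a\}$. $f$ is prime if $P\setminus\Phi f$ is closed under $\wedge$. *)

theory Defs
  imports Main
begin

text \<open>The finite lattice P is modelled as a type of class finite + lattice.
  Elements of L_P are closure operators; the order on maps is the pointwise
  order (le_fun).\<close>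

definition closure_op :: "('a::lattice \<Rightarrow> 'a) \<Rightarrow> bool" where
  "closure_op f \<longleftrightarrow> (\<forall>a. a \<le> f a) \<and> (\<forall>a b. a \<le> b \<longrightarrow> f a \<le> f b) \<and> (\<forall>a. f (f a) = f a)"

definition Fix :: "('a \<Rightarrow> 'a) \<Rightarrow> 'a set" where
  "Fix f = {a. f a = a}"

definition cjoin :: "('a::lattice \<Rightarrow> 'a) \<Rightarrow> ('a \<Rightarrow> 'a) \<Rightarrow> ('a \<Rightarrow> 'a)" (infixl "+\<^sub>L" 65) where
  "cjoin f g = (THE h. closure_op h \<and> f \<le> h \<and> g \<le> h \<and>
      (\<forall>k. closure_op k \<and> f \<le> k \<and> g \<le> k \<longrightarrow> h \<le> k))"

definition prime_op :: "('a::lattice \<Rightarrow> 'a) \<Rightarrow> bool" where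
  "prime_op f \<longleftrightarrow> (\<forall>a\<in>UNIV - Fix f. \<forall>b\<in>UNIV - Fix f. inf a b \<in> UNIV - Fix f)"

end

theory Submission
  imports Defs
begin

definition topL :: "'a::{finite,lattice}" where "topL = Sup_fin UNIV"

lemma le_topL: "(x::'a::{finite,lattice}) \<le> topL"
  unfolding topL_def by (rule Sup_fin.coboundedI) auto

definition clM :: "'a::{finite,lattice} set \<Rightarrow> 'a \<Rightarrow> 'a" where
  "clM M x = Inf_fin {z\<in>M. x \<le> z}"

definition mclosed :: "'a::lattice set \<Rightarrow> bool" where
  "mclosed S \<longleftrightarrow> (\<forall>a\<in>S. \<forall>b\<in>S. inf a b \<in> S)"

lemma Inf_fin_in:
  assumes "finite A" "A \<noteq> {}" "A \<subseteq> S" "mclosed S"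
  shows "Inf_fin A \<in> (S::'a::lattice set)"
  using assms(1,2,3)
proof (induction A rule: finite_ne_induct)
  case (singleton x) then show ?case by simp
next
  case (insert x F)
  then show ?case using assms(4) unfolding mclosed_def by simp
qed

context
  fixes M :: "'a::{finite,lattice} set"
  assumes mc: "mclosed M" and tp: "topL \<in> M"
begin

lemma clM_ne: "{z\<in>M. x \<le> z} \<noteq> {}"
proof -
  have "topL \<in> {z\<in>M. x \<le> z}" using tp le_topL by simp
  then show ?thesis by blast
qed

lemma clM_mem: "clM M x \<in> M"
  unfolding clM_def by (rule Inf_fin_in[OF _ clM_ne _ mc]) auto

lemma clM_ge: "x \<le> clM M x"
  unfolding clM_def by (rule Inf_fin.boundedI, simp, rule clM_ne, simp)

lemma clM_le: "z \<in> M \<Longrightarrow> x \<le> z \<Longrightarrow> clM M x \<le> z"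
  unfolding clM_def by (rule Inf_fin.coboundedI) simp_all

lemma clM_closure: "closure_op (clM M)"
  unfolding closure_op_def
proof (intro conjI allI impI)
  fix a show "a \<le> clM M a" by (rule clM_ge)
next
  fix a b :: 'a assume "a \<le> b"
  then have "a \<le> clM M b" using clM_ge order_trans by blast
  then show "clM M a \<le> clM M b" by (rule clM_le[OF clM_mem])
next
  fix a show "clM M (clM M a) = clM M a"
    by (rule order_antisym[OF clM_le[OF clM_mem order_refl] clM_ge])
qed

lemma clM_Fix: "Fix (clM M) = M"
proof
  show "Fix (clM M) \<subseteq> M"
  proof
    fix z assume "z \<in> Fix (clM M)"
    then have "clM M z = z" by (simp add: Fix_def)
    then show "z \<in> M" using clM_mem[of z] by simp
  qed
  show "M \<subseteq> Fix (clM M)"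
  proof
    fix z assume "z \<in> M"
    then have "clM M z = z" using clM_le[of z z] clM_ge[of z] by simp
    then show "z \<in> Fix (clM M)" unfolding Fix_def by simp
  qed
qed

end

lemma Fix_mclosed:
  assumes "closure_op h" shows "mclosed (Fix h)"
  unfolding mclosed_def
proof (intro ballI)
  fix a b assume "a \<in> Fix h" "b \<in> Fix h"
  then have a: "h a = a" and b: "h b = b" by (simp_all add: Fix_def)
  have mono: "\<And>x y. x \<le> y \<Longrightarrow> h x \<le> h y" and ext: "\<And>x. x \<le> h x"
    using assms unfolding closure_op_def by blast+
  have "h (inf a b) \<le> h a" by (rule mono) simp
  moreover have "h (inf a b) \<le> h b" by (rule mono) simp
  ultimately have "h (inf a b) \<le> inf a b" using a b by simp
  then have "h (inf a b) = inf a b" using ext by (rule order_antisym)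
  then show "inf a b \<in> Fix h" by (simp add: Fix_def)
qed

lemma Fix_top:
  assumes "closure_op h" shows "topL \<in> Fix h"
proof -
  have "topL \<le> h topL" using assms unfolding closure_op_def by blast
  moreover have "h topL \<le> topL" by (rule le_topL)
  ultimately show ?thesis by (simp add: Fix_def order_antisym)
qed

lemma le_iff_Fix:
  assumes "closure_op h" "closure_op k"
  shows "h \<le> k \<longleftrightarrow> Fix k \<subseteq> Fix (h::'a::lattice \<Rightarrow> 'a)"
proof
  assume "h \<le> k"
  show "Fix k \<subseteq> Fix h"
  proof
    fix z assume "z \<in> Fix k"
    then have "k z = z" unfolding Fix_def by simp
    moreover have "h z \<le> k z" using \<open>h \<le> k\<close> unfolding le_fun_def by simp
    moreover have "z \<le> h z" using assms(1) unfolding closure_op_def by simp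
    ultimately show "z \<in> Fix h" unfolding Fix_def by simp
  qed
next
  assume F: "Fix k \<subseteq> Fix h"
  show "h \<le> k" unfolding le_fun_def
  proof
    fix x
    have "k x \<in> Fix k" using assms(2) unfolding closure_op_def Fix_def by simp
    then have "h (k x) = k x" using F unfolding Fix_def by auto
    moreover have "h x \<le> h (k x)" using assms unfolding closure_op_def by simp
    ultimately show "h x \<le> k x" by simp
  qed
qed

lemma mclosed_Int: "mclosed A \<Longrightarrow> mclosed B \<Longrightarrow> mclosed (A \<inter> B)"
  unfolding mclosed_def by auto

lemma cjoin_eq:
  fixes f g :: "'a::{finite,lattice} \<Rightarrow> 'a"
  assumes f: "closure_op f" and g: "closure_op g"
  shows "f +\<^sub>L g = clM (Fix f \<inter> Fix g)"
proof -
  let ?M = "Fix f \<inter> Fix g"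
  have mc: "mclosed ?M" by (intro mclosed_Int Fix_mclosed f g)
  have tp: "topL \<in> ?M" using Fix_top f g by blast
  have cl: "closure_op (clM ?M)" by (rule clM_closure[OF mc tp])
  have FX: "Fix (clM ?M) = ?M" by (rule clM_Fix[OF mc tp])
  have P: "closure_op (clM ?M) \<and> f \<le> clM ?M \<and> g \<le> clM ?M \<and>
      (\<forall>k. closure_op k \<and> f \<le> k \<and> g \<le> k \<longrightarrow> clM ?M \<le> k)"
  proof (intro conjI allI impI)
    show "f \<le> clM ?M" using le_iff_Fix[OF f cl] FX by auto
    show "g \<le> clM ?M" using le_iff_Fix[OF g cl] FX by auto
  next
    fix k assume k: "closure_op k \<and> f \<le> k \<and> g \<le> k"
    then have "Fix k \<subseteq> ?M" using le_iff_Fix f g by blast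
    then show "clM ?M \<le> k" using le_iff_Fix[OF cl] k FX by auto
  qed (rule cl)
  show ?thesis unfolding cjoin_def
  proof (rule the_equality)
    show "closure_op (clM ?M) \<and> f \<le> clM ?M \<and> g \<le> clM ?M \<and>
      (\<forall>k. closure_op k \<and> f \<le> k \<and> g \<le> k \<longrightarrow> clM ?M \<le> k)" by (rule P)
  next
    fix h assume "closure_op h \<and> f \<le> h \<and> g \<le> h \<and>
      (\<forall>k. closure_op k \<and> f \<le> k \<and> g \<le> k \<longrightarrow> h \<le> k)"
    then show "h = clM ?M" using P by (metis order_antisym)
  qed
qed

lemma chain_prime:
  fixes s :: "nat \<Rightarrow> 'a::{finite,lattice}" and f :: "'a \<Rightarrow> 'a"
  assumes f: "closure_op f" and sm: "\<And>m n. m \<le> n \<Longrightarrow> s m \<le> s n"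
  shows "\<exists>u. closure_op u \<and> prime_op u \<and> u \<le> f \<and>
           Fix u = - {x. \<exists>n. s n \<le> x \<and> \<not> f (s n) \<le> x}"
proof -
  define Cu where "Cu = {x. \<exists>n. s n \<le> x \<and> \<not> f (s n) \<le> x}"
  have mono: "\<And>x y. x \<le> y \<Longrightarrow> f x \<le> f y" and ext: "\<And>x. x \<le> f x"
    and idem: "\<And>x. f (f x) = f x"
    using f unfolding closure_op_def by blast+
  have mcC: "mclosed Cu" unfolding mclosed_def
  proof (intro ballI)
    fix a b assume "a \<in> Cu" "b \<in> Cu"
    then obtain m n where a: "s m \<le> a" "\<not> f (s m) \<le> a" and b: "s n \<le> b" "\<not> f (s n) \<le> b"
      unfolding Cu_def by blast
    show "inf a b \<in> Cu"
    proof (cases "m \<le> n")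
      case True
      then have "s m \<le> b" using sm b(1) order_trans by blast
      then have "s m \<le> inf a b" using a(1) by simp
      moreover have "\<not> f (s m) \<le> inf a b" using a(2) by simp
      ultimately show ?thesis unfolding Cu_def by blast
    next
      case False
      then have "s n \<le> a" using sm a(1) order_trans by (metis nat_le_linear)
      then have "s n \<le> inf a b" using b(1) by simp
      moreover have "\<not> f (s n) \<le> inf a b" using b(2) by simp
      ultimately show ?thesis unfolding Cu_def by blast
    qed
  qed
  have mcM: "mclosed (- Cu)" unfolding mclosed_def
  proof (intro ballI)
    fix a b assume a: "a \<in> - Cu" and b: "b \<in> - Cu"
    show "inf a b \<in> - Cu"
    proof
      assume "inf a b \<in> Cu"
      then obtain n where n: "s n \<le> inf a b" "\<not> f (s n) \<le> inf a b" unfolding Cu_def by blast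
      have "f (s n) \<le> a" using a n(1) unfolding Cu_def by auto
      moreover have "f (s n) \<le> b" using b n(1) unfolding Cu_def by auto
      ultimately show False using n(2) by simp
    qed
  qed
  have tp: "topL \<in> - Cu" unfolding Cu_def using le_topL by auto
  have FixC: "Fix f \<subseteq> - Cu"
  proof
    fix z assume "z \<in> Fix f"
    then have z: "f z = z" by (simp add: Fix_def)
    show "z \<in> - Cu"
    proof
      assume "z \<in> Cu"
      then obtain n where "s n \<le> z" "\<not> f (s n) \<le> z" unfolding Cu_def by blast
      then show False using mono[of "s n" z] z by simp
    qed
  qed
  let ?u = "clM (- Cu)"
  have cl: "closure_op ?u" by (rule clM_closure[OF mcM tp])
  have FX: "Fix ?u = - Cu" by (rule clM_Fix[OF mcM tp])
  have pr: "prime_op ?u" unfolding prime_op_def FX using mcC unfolding mclosed_def by simp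
  have le: "?u \<le> f" using le_iff_Fix[OF cl f] FX FixC by simp
  show ?thesis using cl FX pr le unfolding Cu_def by blast
qed

theorem mainTheorem18:
  fixes f g w :: "'a::{finite,lattice} \<Rightarrow> 'a"
  assumes "closure_op f" and "closure_op g" and "closure_op w"
    and "prime_op w" and "w \<le> f +\<^sub>L g"
  shows "\<exists>u v. closure_op u \<and> closure_op v \<and> prime_op u \<and> prime_op v \<and>
           u \<le> f \<and> v \<le> g \<and> w \<le> u +\<^sub>L v"
proof -
  note f = assms(1) and g = assms(2) and w = assms(3)
  have mcFF: "mclosed (Fix f \<inter> Fix g)" by (intro mclosed_Int Fix_mclosed f g)
  have tpFF: "topL \<in> Fix f \<inter> Fix g" using Fix_top f g by blast
  have Fw: "Fix f \<inter> Fix g \<subseteq> Fix w"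
    using assms(5) cjoin_eq[OF f g] le_iff_Fix[OF w clM_closure[OF mcFF tpFF]]
      clM_Fix[OF mcFF tpFF] by simp
  have mcC: "mclosed (UNIV - Fix w)" using assms(4) unfolding prime_op_def mclosed_def by blast
  define J where "J y = {z. z \<notin> Fix w \<and> y \<le> z}" for y
  have mcJ: "mclosed (J y)" for y
    using mcC unfolding mclosed_def J_def by simp
  have Jin: "J y \<noteq> {} \<Longrightarrow> Inf_fin (J y) \<in> J y" for y
    by (rule Inf_fin_in[OF _ _ _ mcJ]) simp_all
  have Jge: "J y \<noteq> {} \<Longrightarrow> y \<le> Inf_fin (J y)" for y
    by (rule Inf_fin.boundedI) (simp_all add: J_def)
  have Jle: "z \<in> J y \<Longrightarrow> Inf_fin (J y) \<le> z" for y z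
    by (rule Inf_fin.coboundedI) simp_all
  define h where "h y = (if f y \<noteq> y then f y else if g y \<noteq> y then g y
      else if J y \<noteq> {} then Inf_fin (J y) else y)" for y
  have extf: "\<And>x. x \<le> f x" using f unfolding closure_op_def by blast
  have extg: "\<And>x. x \<le> g x" using g unfolding closure_op_def by blast
  have hge: "y \<le> h y" for y
    unfolding h_def using extf extg Jge by simp
  define s where "s n = (h ^^ n) (Inf_fin UNIV)" for n
  have sSuc: "s (Suc n) = h (s n)" for n unfolding s_def by simp
  have sm: "m \<le> n \<Longrightarrow> s m \<le> s n" for m n
    by (rule lift_Suc_mono_le[of s]) (simp_all add: sSuc hge)
  have s0: "s 0 \<le> x" for x unfolding s_def by (simp add: Inf_fin.coboundedI)
  have key: "\<exists>n. s n \<le> x \<and> \<not> h (s n) \<le> x" if xC: "x \<notin> Fix w" for x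
  proof (rule ccontr)
    assume "\<not> ?thesis"
    then have st: "s n \<le> x \<Longrightarrow> h (s n) \<le> x" for n by blast
    have all: "s n \<le> x" for n
    proof (induction n)
      case 0 show ?case by (rule s0)
    next
      case (Suc n) then show ?case using st sSuc by simp
    qed
    have "\<not> inj s"
    proof
      assume "inj s"
      moreover have "finite (range s)" by simp
      ultimately have "finite (UNIV :: nat set)" using finite_imageD by blast
      then show False by simp
    qed
    then obtain m n where mn: "m < n" "s m = s n"
      unfolding inj_def by (metis linorder_neq_iff)
    define y where "y = s m"
    have "s (Suc m) \<le> s n" using mn(1) sm by simp
    then have hy: "h y = y" using hge[of y] mn(2) sSuc[of m] unfolding y_def
      by (metis order_antisym)
    have fy: "f y = y" using hy unfolding h_def by (metis)
    have gy: "g y = y" using hy fy unfolding h_def by (metis)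
    have xJ: "x \<in> J y" using all[of m] xC unfolding J_def y_def by simp
    then have "J y \<noteq> {}" by blast
    then have "Inf_fin (J y) = y" using hy fy gy unfolding h_def by simp
    then have "y \<in> J y" using Jin \<open>J y \<noteq> {}\<close> by metis
    then have "y \<notin> Fix w" unfolding J_def by simp
    moreover have "y \<in> Fix w" using fy gy Fw by (auto simp: Fix_def)
    ultimately show False by simp
  qed
  obtain u where u: "closure_op u" "prime_op u" "u \<le> f"
      "Fix u = - {x. \<exists>n. s n \<le> x \<and> \<not> f (s n) \<le> x}"
    using chain_prime[of f s] f sm by blast
  obtain v where v: "closure_op v" "prime_op v" "v \<le> g"
      "Fix v = - {x. \<exists>n. s n \<le> x \<and> \<not> g (s n) \<le> x}"
    using chain_prime[of g s] g sm by blast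
  have mcUV: "mclosed (Fix u \<inter> Fix v)" by (intro mclosed_Int Fix_mclosed u(1) v(1))
  have tpUV: "topL \<in> Fix u \<inter> Fix v" using Fix_top u(1) v(1) by blast
  have UVw: "Fix u \<inter> Fix v \<subseteq> Fix w"
  proof
    fix z assume zuv: "z \<in> Fix u \<inter> Fix v"
    show "z \<in> Fix w"
    proof (rule ccontr)
      assume zC: "z \<notin> Fix w"
      then obtain n where n: "s n \<le> z" "\<not> h (s n) \<le> z" using key by blast
      show False
      proof (cases "f (s n) \<noteq> s n")
        case True
        then have "\<not> f (s n) \<le> z" using n(2) unfolding h_def by simp
        then show False using zuv n(1) u(4) by auto
      next
        case F: False
        show False
        proof (cases "g (s n) \<noteq> s n")
          case True
          then have "\<not> g (s n) \<le> z" using n(2) F unfolding h_def by simp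
          then show False using zuv n(1) v(4) by auto
        next
          case False
          have zJ: "z \<in> J (s n)" using zC n(1) unfolding J_def by simp
          then have "h (s n) = Inf_fin (J (s n))" using F False unfolding h_def by auto
          then show False using Jle[OF zJ] n(2) by simp
        qed
      qed
    qed
  qed
  have "w \<le> u +\<^sub>L v"
    using UVw cjoin_eq[OF u(1) v(1)] le_iff_Fix[OF w clM_closure[OF mcUV tpUV]]
      clM_Fix[OF mcUV tpUV] by simp
  then show ?thesis using u v by blast
qed

end
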